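(* Given any ILPDC $C$ and any ILFST $T$, there is an ILPDC $N$ such that $N(x)=C(T(x))$ for all $x\in\{0,1\}^*$. Similarly, given any ILUPDC $C$ and any ILFST $T$, there is an ILUPDC $N$ such that $N(x)=C(T(x))$ for all $x\in\{0,1\}^*$.
   Context: A finite-state transducer (FST) is $T=(Q,q_0,\delta,\nu)$ with finite state set $Q$, start state $q_0$, transition function $\delta:Q\times\{0,1\}\to Q$ and output function $\nu:Q\times\{0,1\}\to\{0,1\}^*$; with $\hat\delta$ the extended transition function, $T(\lambda)=\lambda$ and $T(xb)=T(x)\nu(\hat\delta(x),b)$. $T$ is information lossless (an ILFST) if $x\mapsto(T(x),\hat\delta(x))$ is injective. A pushdown compressor (PDC) is a tuple $C=(Q,\Gamma,\delta,\nu,q_0,z_0,c)$ where $Q$ is a finite nonempty set of states, $\Gamma=\{0,1,z_0\}$ is the stack alphabet with $z_0$ the bottom-of-stack symbol, $\delta: Q\times(\{0,1\}\cup\{\lambda\})\times\Gamma\to Q\times\Gamma^*$ is a partial transition function, $\nu: Q\times(\{0,1\}\cup\{\lambda\})\times\Gamma\to\{0,1\}^*$ is the output function, $q_0$ is the start state, and $c\in\mathbb{N}$ bounds the number of consecutive $\lambda$-transitions (transitions reading no input bit, which pop the top stack symbol and output nothing). On each transition the top stack symbol is replaced by the string given by $\delta$; $z_0$ is never removed. Determinism: for each state $q$ and top symbol $a$, either $\delta(q,\lambda,a)$ is undefined or $\delta(q,b,a)$ is undefined for both $b\in\{0,1\}$. After each input bit all available $\lambda$-transitions are performed. $C(w)$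 denotes the output on input $w$ from $q_0$ with stack $z_0$, and $\delta_Q(w)$ the resulting state. $C$ is information lossless (ILPDC) if $w\mapsto (C(w),\delta_Q(w))$ is injective. A unary-stack PDC (UPDC) is identical but with stack alphabet $\{0,z_0\}$; information lossless ones are ILUPDCs. The constant $c$ of $N$ may differ from that of $C$. *)

theory Defs
  imports Main
begin

(* Bits are booleans (False = 0, True = 1); strings over {0,1} are bool lists.
   State sets are finite sets of natural numbers (w.l.o.g.). *)

record fst =
  f_states :: "nat set"
  f_start  :: nat
  f_delta  :: "nat \<Rightarrow> bool \<Rightarrow> nat"
  f_nu     :: "nat \<Rightarrow> bool \<Rightarrow> bool list"

definition fst_wf :: "fst \<Rightarrow> bool" where
  "fst_wf T \<longleftrightarrow> finite (f_states T) \<and> f_start T \<in> f_states T \<and>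
     (\<forall>q\<in>f_states T. \<forall>b. f_delta T q b \<in> f_states T)"

definition fst_run :: "fst \<Rightarrow> bool list \<Rightarrow> nat \<times> bool list" where
  "fst_run T x = foldl (\<lambda>(q, out) b. (f_delta T q b, out @ f_nu T q b)) (f_start T, []) x"

definition fst_state :: "fst \<Rightarrow> bool list \<Rightarrow> nat" where
  "fst_state T x = fst (fst_run T x)"

definition fst_out :: "fst \<Rightarrow> bool list \<Rightarrow> bool list" where
  "fst_out T x = snd (fst_run T x)"

definition ILFST :: "fst \<Rightarrow> bool" where
  "ILFST T \<longleftrightarrow> fst_wf T \<and> inj (\<lambda>x. (fst_out T x, fst_state T x))"

datatype sym = S0 | S1 | Z0

(* input None = lambda; stack is a list with the top at the head *)
record pdc =
  p_states :: "nat set"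
  p_start  :: nat
  p_delta  :: "nat \<Rightarrow> bool option \<Rightarrow> sym \<Rightarrow> (nat \<times> sym list) option"
  p_nu     :: "nat \<Rightarrow> bool option \<Rightarrow> sym \<Rightarrow> bool list"
  p_c      :: nat

type_synonym config = "nat \<times> sym list \<times> bool list"  (* state, stack, output so far *)

definition pdc_structural :: "pdc \<Rightarrow> bool" where
  "pdc_structural C \<longleftrightarrow>
     finite (p_states C) \<and> p_start C \<in> p_states C \<and>
     (\<forall>q\<in>p_states C. \<forall>i a q' g. p_delta C q i a = Some (q', g) \<longrightarrow> q' \<in> p_states C) \<and>
     \<comment> \<open>z0 is never removed and only occurs at the bottom\<close>
     (\<forall>q i q' g. p_delta C q i Z0 = Some (q', g) \<longrightarrow>
         g \<noteq> [] \<and> last g = Z0 \<and> Z0 \<notin> set (butlast g)) \<and>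
     (\<forall>q i a q' g. a \<noteq> Z0 \<longrightarrow> p_delta C q i a = Some (q', g) \<longrightarrow> Z0 \<notin> set g) \<and>
     \<comment> \<open>lambda-transitions pop the top symbol and output nothing\<close>
     (\<forall>q a q' g. p_delta C q None a = Some (q', g) \<longrightarrow> a \<noteq> Z0 \<and> g = []) \<and>
     (\<forall>q a. p_delta C q None a \<noteq> None \<longrightarrow> p_nu C q None a = []) \<and>
     \<comment> \<open>determinism\<close>
     (\<forall>q a b. p_delta C q None a \<noteq> None \<longrightarrow> p_delta C q (Some b) a = None)"

fun pdc_step :: "pdc \<Rightarrow> bool option \<Rightarrow> config \<Rightarrow> config option" where
  "pdc_step C i (q, [], out) = None"
| "pdc_step C i (q, a # r, out) =
     (case p_delta C q i a of
        None \<Rightarrow> None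
      | Some (q', g) \<Rightarrow> Some (q', g @ r, out @ p_nu C q i a))"

fun lam_close :: "pdc \<Rightarrow> nat \<Rightarrow> config \<Rightarrow> config" where
  "lam_close C 0 cfg = cfg"
| "lam_close C (Suc k) cfg =
     (case pdc_step C None cfg of None \<Rightarrow> cfg | Some cfg' \<Rightarrow> lam_close C k cfg')"

(* Run on an input word: after each input bit all available lambda-transitions are
   performed; the run is undefined (None) if an input transition is undefined or if more
   than c consecutive lambda-transitions would be needed. *)
definition pdc_run :: "pdc \<Rightarrow> bool list \<Rightarrow> config option" where
  "pdc_run C w = foldl (\<lambda>oc b. case oc of None \<Rightarrow> None
       | Some cfg \<Rightarrow> (case pdc_step C (Some b) cfg of None \<Rightarrow> None
           | Some cfg1 \<Rightarrow> (let cfg2 = lam_close C (p_c C) cfg1 in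
                if pdc_step C None cfg2 = None then Some cfg2 else None)))
     (Some (p_start C, [Z0], [])) w"

definition is_pdc :: "pdc \<Rightarrow> bool" where
  "is_pdc C \<longleftrightarrow> pdc_structural C \<and> (\<forall>w. pdc_run C w \<noteq> None)"

definition pdc_out :: "pdc \<Rightarrow> bool list \<Rightarrow> bool list" where
  "pdc_out C w = (case pdc_run C w of Some (q, s, out) \<Rightarrow> out | None \<Rightarrow> [])"

definition pdc_state :: "pdc \<Rightarrow> bool list \<Rightarrow> nat" where
  "pdc_state C w = (case pdc_run C w of Some (q, s, out) \<Rightarrow> q | None \<Rightarrow> p_start C)"

definition ILPDC :: "pdc \<Rightarrow> bool" where
  "ILPDC C \<longleftrightarrow> is_pdc C \<and> inj (\<lambda>w. (pdc_out C w, pdc_state C w))"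

(* unary stack: stack alphabet {0, z0}, i.e. the symbol 1 is never pushed *)
definition is_updc :: "pdc \<Rightarrow> bool" where
  "is_updc C \<longleftrightarrow> is_pdc C \<and> (\<forall>q i a q' g. p_delta C q i a = Some (q', g) \<longrightarrow> S1 \<notin> set g)"

definition ILUPDC :: "pdc \<Rightarrow> bool" where
  "ILUPDC C \<longleftrightarrow> is_updc C \<and> inj (\<lambda>w. (pdc_out C w, pdc_state C w))"

end

theory Submission
  imports Defs "HOL-Library.Countable"
begin

instance sym :: countable by countable_datatype

definition stepC :: "pdc \<Rightarrow> bool \<Rightarrow> config \<Rightarrow> config option" where
"stepC C b cfg = (case pdc_step C (Some b) cfg of None \<Rightarrow> None
   | Some cfg1 \<Rightarrow> (let cfg2 = lam_close C (p_c C) cfg1 in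
        if pdc_step C None cfg2 = None then Some cfg2 else None))"

definition runFrom :: "pdc \<Rightarrow> config option \<Rightarrow> bool list \<Rightarrow> config option" where
"runFrom C oc w = foldl (\<lambda>oc b. case oc of None \<Rightarrow> None | Some cfg \<Rightarrow> stepC C b cfg) oc w"

lemma pdc_run_runFrom: "pdc_run C w = runFrom C (Some (p_start C, [Z0], [])) w"
  unfolding pdc_run_def runFrom_def stepC_def by simp

lemma runFrom_None[simp]: "runFrom C None w = None"
  by (induction w) (simp_all add: runFrom_def)

lemma runFrom_Nil[simp]: "runFrom C oc [] = oc"
  by (simp add: runFrom_def)

lemma runFrom_Cons[simp]: "runFrom C (Some cfg) (b#w) = runFrom C (stepC C b cfg) w"
  by (simp add: runFrom_def)

lemma runFrom_append: "runFrom C oc (w@v) = runFrom C (runFrom C oc w) v"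
  by (simp add: runFrom_def)

definition shift :: "sym list \<Rightarrow> bool list \<Rightarrow> config \<Rightarrow> config" where
"shift r ob cfg = (case cfg of (q,s,o1) \<Rightarrow> (q, s@r, ob@o1))"

lemma shift_simp[simp]: "shift r ob (q,s,o1) = (q, s@r, ob@o1)"
  by (simp add: shift_def)

lemma step_shift: "s \<noteq> [] \<Longrightarrow> pdc_step C i (q, s@r, ob@o1) = map_option (shift r ob) (pdc_step C i (q,s,o1))"
  by (cases s) (auto split: option.split)

definition good :: "nat \<Rightarrow> sym list \<Rightarrow> bool" where
"good n s = (Z0 \<in> set s \<or> n < length s)"

lemma good_mono: "good m s \<Longrightarrow> n \<le> m \<Longrightarrow> good n s"
  unfolding good_def by auto

lemma good_ne: "good n s \<Longrightarrow> s \<noteq> []"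
  unfolding good_def by auto

lemma lam_step_props:
  assumes "pdc_structural C" "pdc_step C None (q,s,o1) = Some (q',s',o')"
  shows "length s = Suc (length s') \<and> (Z0 \<in> set s \<longrightarrow> Z0 \<in> set s')"
proof (cases s)
  case Nil then show ?thesis using assms by simp
next
  case (Cons a rest)
  then obtain g where d: "p_delta C q None a = Some (q', g)" and s': "s' = g @ rest"
    using assms(2) by (auto split: option.splits)
  then have "a \<noteq> Z0 \<and> g = []" using assms(1) unfolding pdc_structural_def by blast
  then show ?thesis using Cons s' by auto
qed

lemma in_step_props:
  assumes "pdc_structural C" "pdc_step C (Some b) (q,s,o1) = Some (q',s',o')"
  shows "length s \<le> Suc (length s') \<and> (Z0 \<in> set s \<longrightarrow> Z0 \<in> set s')"
proof (cases s)
  case Nil then show ?thesis using assms by simp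
next
  case (Cons a rest)
  then obtain g where d: "p_delta C q (Some b) a = Some (q', g)" and s': "s' = g @ rest"
    using assms(2) by (auto split: option.splits)
  have "a = Z0 \<longrightarrow> g \<noteq> [] \<and> last g = Z0" using d assms(1) unfolding pdc_structural_def by blast
  then have "a = Z0 \<longrightarrow> Z0 \<in> set g" by (metis last_in_set)
  then show ?thesis using Cons s' by auto
qed

lemma lam_shift:
  assumes "pdc_structural C"
  shows "good k s \<Longrightarrow> lam_close C k (q, s@r, ob@o1) = shift r ob (lam_close C k (q,s,o1))"
proof (induction k arbitrary: q s o1)
  case 0 then show ?case by simp
next
  case (Suc k)
  have ne: "s \<noteq> []" using Suc.prems good_ne by blast
  show ?case
  proof (cases "pdc_step C None (q,s,o1)")
    case None
    then show ?thesis using step_shift[OF ne, of C None q r ob o1] by simp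
  next
    case (Some cfg')
    then obtain q' s' o' where c: "cfg' = (q',s',o')" by (cases cfg') auto
    have p: "length s = Suc (length s') \<and> (Z0 \<in> set s \<longrightarrow> Z0 \<in> set s')"
      using lam_step_props[OF assms] Some c by blast
    have "good k s'" using Suc.prems p unfolding good_def by auto
    then show ?thesis using Suc.IH Some c step_shift[OF ne, of C None q r ob o1] by simp
  qed
qed

lemma lam_good:
  assumes "pdc_structural C"
  shows "good (n+k) s \<Longrightarrow> good n (fst (snd (lam_close C k (q,s,o1))))"
proof (induction k arbitrary: q s o1)
  case 0 then show ?case by simp
next
  case (Suc k)
  show ?case
  proof (cases "pdc_step C None (q,s,o1)")
    case None
    then show ?thesis using Suc.prems good_mono[of "n + Suc k" s n] by simp
  next
    case (Some cfg')
    then obtain q' s' o' where c: "cfg' = (q',s',o')" by (cases cfg') auto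
    have p: "length s = Suc (length s') \<and> (Z0 \<in> set s \<longrightarrow> Z0 \<in> set s')"
      using lam_step_props[OF assms] Some c by blast
    have "good (n+k) s'" using Suc.prems p unfolding good_def by auto
    then show ?thesis using Suc.IH Some c by simp
  qed
qed


lemma stepC_shift:
  assumes st: "pdc_structural C" and g: "good (Suc (p_c C)) s"
  shows "stepC C b (q, s@r, ob@o1) = map_option (shift r ob) (stepC C b (q,s,o1))"
proof -
  have ne: "s \<noteq> []" using g good_ne by blast
  show ?thesis
  proof (cases "pdc_step C (Some b) (q,s,o1)")
    case None
    then show ?thesis using step_shift[OF ne, of C "Some b" q r ob o1] by (simp add: stepC_def)
  next
    case (Some cfg1)
    then obtain q1 s1 o1' where c: "cfg1 = (q1,s1,o1')" by (cases cfg1) auto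
    have p: "length s \<le> Suc (length s1) \<and> (Z0 \<in> set s \<longrightarrow> Z0 \<in> set s1)"
      using in_step_props[OF st] Some c by blast
    have g1: "good (p_c C) s1" using g p unfolding good_def by auto
    obtain q2 s2 o2 where c2: "lam_close C (p_c C) (q1,s1,o1') = (q2,s2,o2)"
      by (cases "lam_close C (p_c C) (q1,s1,o1')") auto
    have ls: "lam_close C (p_c C) (q1, s1@r, ob@o1') = (q2, s2@r, ob@o2)"
      using lam_shift[OF st g1, of q1 r ob o1'] c2 by simp
    have "good 0 s2" using lam_good[OF st, of 0 "p_c C" s1 q1 o1'] g1 c2 by simp
    then have ne2: "s2 \<noteq> []" using good_ne by blast
    have e2: "pdc_step C None (q2, s2@r, ob@o2) = map_option (shift r ob) (pdc_step C None (q2,s2,o2))"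
      using step_shift[OF ne2] by blast
    have e1: "pdc_step C (Some b) (q, s@r, ob@o1) = Some (q1, s1@r, ob@o1')"
      using step_shift[OF ne, of C "Some b" q r ob o1] Some c by simp
    show ?thesis unfolding stepC_def using Some c c2 ls e1 e2 by (simp add: Let_def)
  qed
qed

lemma stepC_good:
  assumes st: "pdc_structural C" and g: "good (n + Suc (p_c C)) s"
    and r: "stepC C b (q,s,o1) = Some (q',s',o')"
  shows "good n s'"
proof -
  obtain cfg1 where Some: "pdc_step C (Some b) (q,s,o1) = Some cfg1"
    using r by (cases "pdc_step C (Some b) (q,s,o1)") (auto simp: stepC_def)
  obtain q1 s1 o1' where c: "cfg1 = (q1,s1,o1')" by (cases cfg1) auto
  have p: "length s \<le> Suc (length s1) \<and> (Z0 \<in> set s \<longrightarrow> Z0 \<in> set s1)"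
    using in_step_props[OF st] Some c by blast
  have g1: "good (n + p_c C) s1" using g p unfolding good_def by auto
  have "lam_close C (p_c C) (q1,s1,o1') = (q',s',o')"
    using r Some c unfolding stepC_def by (auto simp: Let_def split: if_splits)
  then show ?thesis using lam_good[OF st g1, of q1 o1'] by simp
qed

lemma runFrom_shift:
  assumes st: "pdc_structural C"
  shows "good (length u * Suc (p_c C)) s \<Longrightarrow>
    runFrom C (Some (q, s@r, ob@o1)) u = map_option (shift r ob) (runFrom C (Some (q,s,o1)) u)"
proof (induction u arbitrary: q s o1)
  case Nil then show ?case by simp
next
  case (Cons b u)
  have g: "good (Suc (p_c C)) s" using Cons.prems good_mono by fastforce
  note e = stepC_shift[OF st g, of b q r ob o1]
  show ?case
  proof (cases "stepC C b (q,s,o1)")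
    case None then show ?thesis using e by simp
  next
    case (Some cfg')
    then obtain q' s' o' where c: "cfg' = (q',s',o')" by (cases cfg') auto
    have "good (length u * Suc (p_c C) + Suc (p_c C)) s" using Cons.prems by (simp add: algebra_simps)
    then have "good (length u * Suc (p_c C)) s'" using stepC_good[OF st] Some c by blast
    then show ?thesis using Cons.IH e Some c by simp
  qed
qed

lemma lam_inv:
  assumes "\<forall>cfg cfg'. P cfg \<longrightarrow> pdc_step C None cfg = Some cfg' \<longrightarrow> P cfg'"
  shows "P cfg \<Longrightarrow> P (lam_close C k cfg)"
proof (induction k arbitrary: cfg)
  case 0 then show ?case by simp
next
  case (Suc k)
  show ?case
  proof (cases "pdc_step C None cfg")
    case None then show ?thesis using Suc by simp
  next
    case (Some c1)
    then have "P c1" using assms Suc.prems by blast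
    then show ?thesis using Suc.IH Some by simp
  qed
qed

lemma stepC_inv:
  assumes "\<forall>i cfg cfg'. P cfg \<longrightarrow> pdc_step C i cfg = Some cfg' \<longrightarrow> P cfg'"
    and "P cfg" and "stepC C b cfg = Some cfg'"
  shows "P cfg'"
proof -
  obtain cfg1 where s: "pdc_step C (Some b) cfg = Some cfg1"
    using assms(3) by (cases "pdc_step C (Some b) cfg") (auto simp: stepC_def)
  have "P cfg1" using assms(1,2) s by blast
  moreover have "\<forall>cfg cfg'. P cfg \<longrightarrow> pdc_step C None cfg = Some cfg' \<longrightarrow> P cfg'" using assms(1) by blast
  ultimately have "P (lam_close C (p_c C) cfg1)" using lam_inv[of P C] by blast
  moreover have "cfg' = lam_close C (p_c C) cfg1"
    using assms(3) s unfolding stepC_def by (auto simp: Let_def split: if_splits)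
  ultimately show ?thesis by simp
qed

lemma runFrom_inv:
  assumes "\<forall>i cfg cfg'. P cfg \<longrightarrow> pdc_step C i cfg = Some cfg' \<longrightarrow> P cfg'"
  shows "P cfg \<Longrightarrow> runFrom C (Some cfg) w = Some cfg' \<Longrightarrow> P cfg'"
proof (induction w arbitrary: cfg)
  case Nil then show ?case by simp
next
  case (Cons b w)
  show ?case
  proof (cases "stepC C b cfg")
    case None then show ?thesis using Cons.prems by simp
  next
    case (Some c1)
    then have "P c1" using stepC_inv[of P C cfg b c1] assms Cons.prems(1) by blast
    then show ?thesis using Cons.IH Cons.prems Some by simp
  qed
qed

definition uflag :: "pdc \<Rightarrow> bool" where
"uflag C = (\<forall>q i a q' g. p_delta C q i a = Some (q', g) \<longrightarrow> S1 \<notin> set g)"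

definition wfs :: "sym list \<Rightarrow> bool" where
"wfs s = (s \<noteq> [] \<and> last s = Z0 \<and> Z0 \<notin> set (butlast s))"

definition Ist :: "pdc \<Rightarrow> config \<Rightarrow> bool" where
"Ist C cfg = (fst cfg \<in> p_states C)"

definition Iwf :: "pdc \<Rightarrow> config \<Rightarrow> bool" where
"Iwf C cfg = (wfs (fst (snd cfg)) \<and> (uflag C \<longrightarrow> S1 \<notin> set (fst (snd cfg))))"

lemma step_cases:
  assumes "pdc_step C i (q,s,ob) = Some cfg'"
  obtains a rest q' g where "s = a # rest" "p_delta C q i a = Some (q', g)"
    "cfg' = (q', g @ rest, ob @ p_nu C q i a)"
  using assms by (cases s) (auto split: option.splits)

lemma Ist_step:
  assumes "pdc_structural C" "Ist C cfg" "pdc_step C i cfg = Some cfg'"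
  shows "Ist C cfg'"
proof -
  obtain q s ob where c: "cfg = (q,s,ob)" by (cases cfg) auto
  from step_cases[OF assms(3)[unfolded c]] obtain a rest q' g where
    "s = a # rest" "p_delta C q i a = Some (q', g)" "cfg' = (q', g @ rest, ob @ p_nu C q i a)" .
  then show ?thesis using assms(1,2) c unfolding pdc_structural_def Ist_def by (metis fst_conv)
qed

lemma Iwf_step:
  assumes "pdc_structural C" "Iwf C cfg" "pdc_step C i cfg = Some cfg'"
  shows "Iwf C cfg'"
proof -
  obtain q s ob where c: "cfg = (q,s,ob)" by (cases cfg) auto
  from step_cases[OF assms(3)[unfolded c]] obtain a rest q' g where
    s: "s = a # rest" and d: "p_delta C q i a = Some (q', g)" and c': "cfg' = (q', g @ rest, ob @ p_nu C q i a)" .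
  have w: "wfs (a#rest)" and u: "uflag C \<longrightarrow> S1 \<notin> set (a#rest)" using assms(2) c s unfolding Iwf_def by auto
  have u2: "uflag C \<longrightarrow> S1 \<notin> set g" using d unfolding uflag_def by blast
  have "wfs (g @ rest)"
  proof (cases "a = Z0")
    case True
    then have "rest = []" using w unfolding wfs_def by (cases rest) auto
    moreover have "g \<noteq> [] \<and> last g = Z0 \<and> Z0 \<notin> set (butlast g)"
      using d True assms(1) unfolding pdc_structural_def by blast
    ultimately show ?thesis unfolding wfs_def by simp
  next
    case False
    then have "rest \<noteq> []" "last rest = Z0" "Z0 \<notin> set (butlast rest)"
      using w unfolding wfs_def by (cases rest; auto)+
    moreover have "Z0 \<notin> set g" using d False assms(1) unfolding pdc_structural_def by blast
    ultimately show ?thesis unfolding wfs_def by (simp add: butlast_append)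
  qed
  then show ?thesis using u u2 c' unfolding Iwf_def by auto
qed

lemma run_Ist:
  assumes "pdc_structural C" "p \<in> p_states C" "runFrom C (Some (p,s,ob)) w = Some (p',s',o')"
  shows "p' \<in> p_states C"
proof -
  have "\<forall>i cfg cfg'. Ist C cfg \<longrightarrow> pdc_step C i cfg = Some cfg' \<longrightarrow> Ist C cfg'"
    using Ist_step[OF assms(1)] by blast
  then show ?thesis using runFrom_inv[of "Ist C" C "(p,s,ob)" w "(p',s',o')"] assms
    unfolding Ist_def by auto
qed

lemma pdc_run_inv:
  assumes "pdc_structural C" "pdc_run C w = Some (p,s,ob)"
  shows "p \<in> p_states C \<and> wfs s \<and> (uflag C \<longrightarrow> S1 \<notin> set s)"
proof -
  have i: "runFrom C (Some (p_start C, [Z0], [])) w = Some (p,s,ob)" using assms(2) pdc_run_runFrom by metis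
  have a1: "\<forall>i cfg cfg'. Ist C cfg \<longrightarrow> pdc_step C i cfg = Some cfg' \<longrightarrow> Ist C cfg'"
    using Ist_step[OF assms(1)] by blast
  have a2: "\<forall>i cfg cfg'. Iwf C cfg \<longrightarrow> pdc_step C i cfg = Some cfg' \<longrightarrow> Iwf C cfg'"
    using Iwf_step[OF assms(1)] by blast
  have "Ist C (p,s,ob)"
    using runFrom_inv[of "Ist C" C, OF a1 _ i] assms(1)
    unfolding Ist_def pdc_structural_def by auto
  moreover have "Iwf C (p,s,ob)"
    using runFrom_inv[of "Iwf C" C, OF a2 _ i]
    unfolding Iwf_def wfs_def by auto
  ultimately show ?thesis unfolding Ist_def Iwf_def by auto
qed


definition Lmax :: "fst \<Rightarrow> nat" where
"Lmax T = Max ((\<lambda>(q,b). length (f_nu T q b)) ` (f_states T \<times> UNIV))"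

definition Mb :: "pdc \<Rightarrow> fst \<Rightarrow> nat" where
"Mb C T = Lmax T * Suc (p_c C)"

definition enc :: "nat \<Rightarrow> nat \<Rightarrow> sym list \<Rightarrow> nat" where
"enc t p buf = to_nat (t, p, buf)"

definition dec :: "nat \<Rightarrow> nat \<times> nat \<times> sym list" where
"dec q = from_nat q"

lemma dec_enc[simp]: "dec (enc t p buf) = (t, p, buf)"
  by (simp add: dec_def enc_def)

lemma enc_inj: "enc t p buf = enc t' p' buf' \<Longrightarrow> t = t' \<and> p = p' \<and> buf = buf'"
  by (metis dec_enc prod.inject)

definition okg :: "pdc \<Rightarrow> sym \<Rightarrow> sym list \<Rightarrow> bool" where
"okg C a g = ((if a = Z0 then g \<noteq> [] \<and> last g = Z0 \<and> Z0 \<notin> set (butlast g) else Z0 \<notin> set g)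
   \<and> (uflag C \<longrightarrow> S1 \<notin> set g))"

definition ntrans :: "pdc \<Rightarrow> fst \<Rightarrow> nat \<Rightarrow> nat \<Rightarrow> sym list \<Rightarrow> bool \<Rightarrow> sym \<Rightarrow> nat \<times> sym list \<times> bool list" where
"ntrans C T t p buf b a =
  (let t' = f_delta T t b; fb = (enc t' p [], if a = Z0 then [Z0] else [], []) in
   case runFrom C (Some (p, buf@[a], [])) (f_nu T t b) of None \<Rightarrow> fb
   | Some (p', s', o1) \<Rightarrow> if okg C a s' then (enc t' p' [], s', o1) else fb)"

definition NN :: "pdc \<Rightarrow> fst \<Rightarrow> pdc" where
"NN C T = \<lparr> p_states = (\<lambda>(t,p,buf). enc t p buf) ` (f_states T \<times> p_states C \<times> {bs. length bs \<le> Mb C T}),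
  p_start = enc (f_start T) (p_start C) [],
  p_delta = (\<lambda>q i a. case dec q of (t,p,buf) \<Rightarrow> (case i of
      None \<Rightarrow> if a \<noteq> Z0 \<and> length buf < Mb C T then Some (enc t p (buf@[a]), []) else None
    | Some b \<Rightarrow> if a \<noteq> Z0 \<and> length buf < Mb C T then None
               else Some (fst (ntrans C T t p buf b a), fst (snd (ntrans C T t p buf b a))))),
  p_nu = (\<lambda>q i a. case dec q of (t,p,buf) \<Rightarrow> (case i of None \<Rightarrow> []
      | Some b \<Rightarrow> snd (snd (ntrans C T t p buf b a)))),
  p_c = Mb C T \<rparr>"

lemma NN_delta_None': "dec q = (t,p,buf) \<Longrightarrow> p_delta (NN C T) q None a =
   (if a \<noteq> Z0 \<and> length buf < Mb C T then Some (enc t p (buf@[a]), []) else None)"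
  by (simp add: NN_def)

lemma NN_delta_Some': "dec q = (t,p,buf) \<Longrightarrow> p_delta (NN C T) q (Some b) a =
   (if a \<noteq> Z0 \<and> length buf < Mb C T then None
    else Some (fst (ntrans C T t p buf b a), fst (snd (ntrans C T t p buf b a))))"
  by (simp add: NN_def)

lemma NN_delta_None: "p_delta (NN C T) (enc t p buf) None a =
   (if a \<noteq> Z0 \<and> length buf < Mb C T then Some (enc t p (buf@[a]), []) else None)"
  by (simp add: NN_def)

lemma NN_delta_Some: "p_delta (NN C T) (enc t p buf) (Some b) a =
   (if a \<noteq> Z0 \<and> length buf < Mb C T then None
    else Some (fst (ntrans C T t p buf b a), fst (snd (ntrans C T t p buf b a))))"
  by (simp add: NN_def)

lemma NN_nu_None: "p_nu (NN C T) q None a = []"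
  by (simp add: NN_def split: prod.split)

lemma NN_nu_Some: "p_nu (NN C T) (enc t p buf) (Some b) a = snd (snd (ntrans C T t p buf b a))"
  by (simp add: NN_def)

lemma NN_c[simp]: "p_c (NN C T) = Mb C T" by (simp add: NN_def)
lemma NN_start[simp]: "p_start (NN C T) = enc (f_start T) (p_start C) []" by (simp add: NN_def)
lemma NN_states: "p_states (NN C T) = (\<lambda>(t,p,buf). enc t p buf) ` (f_states T \<times> p_states C \<times> {bs. length bs \<le> Mb C T})"
  by (simp add: NN_def)

lemma ntrans_props:
  assumes st: "pdc_structural C" and p: "p \<in> p_states C"
  shows "\<exists>p'. p' \<in> p_states C \<and> fst (ntrans C T t p buf b a) = enc (f_delta T t b) p' []"
    "okg C a (fst (snd (ntrans C T t p buf b a)))"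
proof -
  have fbok: "okg C a (if a = Z0 then [Z0] else [])" unfolding okg_def by auto
  show "\<exists>p'. p' \<in> p_states C \<and> fst (ntrans C T t p buf b a) = enc (f_delta T t b) p' []"
  proof (cases "runFrom C (Some (p, buf@[a], [])) (f_nu T t b)")
    case None then show ?thesis using p by (intro exI[of _ p]) (simp add: ntrans_def Let_def)
  next
    case (Some cfg)
    then obtain p' s' o1 where c: "cfg = (p',s',o1)" by (cases cfg) auto
    have "p' \<in> p_states C" using run_Ist[OF st p] Some c by blast
    then show ?thesis using p Some c by (auto simp: ntrans_def Let_def)
  qed
  show "okg C a (fst (snd (ntrans C T t p buf b a)))"
    using fbok by (auto simp: ntrans_def Let_def split: option.split prod.split)
qed

lemma finite_sym: "finite (UNIV :: sym set)"
proof -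
  have "(UNIV :: sym set) = {S0, S1, Z0}" using sym.exhaust by blast
  then show ?thesis by (metis finite.emptyI finite.insertI)
qed

lemma NN_structural:
  assumes st: "pdc_structural C" and T: "fst_wf T"
  shows "pdc_structural (NN C T)"
proof -
  let ?N = "NN C T"
  let ?M = "Mb C T"
  have fin: "finite (p_states ?N)"
  proof -
    have "finite {bs :: sym list. set bs \<subseteq> UNIV \<and> length bs \<le> ?M}"
      by (rule finite_lists_length_le[OF finite_sym])
    then have "finite {bs :: sym list. length bs \<le> ?M}" by simp
    moreover have "finite (f_states T)" using T unfolding fst_wf_def by blast
    moreover have "finite (p_states C)" using st unfolding pdc_structural_def by blast
    ultimately have "finite (f_states T \<times> p_states C \<times> {bs :: sym list. length bs \<le> ?M})"
      by (intro finite_SigmaI)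
    then show ?thesis unfolding NN_states by (rule finite_imageI)
  qed
  have inS: "\<And>t p (buf :: sym list). t \<in> f_states T \<Longrightarrow> p \<in> p_states C \<Longrightarrow> length buf \<le> ?M \<Longrightarrow> enc t p buf \<in> p_states ?N"
  proof -
    fix t p and buf :: "sym list" assume "t \<in> f_states T" "p \<in> p_states C" "length buf \<le> ?M"
    then have "(t,p,buf) \<in> f_states T \<times> p_states C \<times> {bs :: sym list. length bs \<le> ?M}" by simp
    then show "enc t p buf \<in> p_states ?N" unfolding NN_states
      by (rule image_eqI[rotated]) simp
  qed
  have start: "p_start ?N \<in> p_states ?N"
    using st T inS[of "f_start T" "p_start C" "[]"] unfolding pdc_structural_def fst_wf_def by simp
  have clos: "\<forall>q\<in>p_states ?N. \<forall>i a q' g. p_delta ?N q i a = Some (q', g) \<longrightarrow> q' \<in> p_states ?N"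
  proof (intro ballI allI impI)
    fix q i a q' g
    assume q: "q \<in> p_states ?N" and d: "p_delta ?N q i a = Some (q', g)"
    obtain t p buf where qe: "q = enc t p buf" and t: "t \<in> f_states T" and p: "p \<in> p_states C"
      and lb: "length buf \<le> ?M" using q unfolding NN_states by auto
    show "q' \<in> p_states ?N"
    proof (cases i)
      case None
      then have "q' = enc t p (buf@[a])" "length buf < ?M" using d unfolding qe None NN_delta_None
        by (auto split: if_splits)
      then show ?thesis using t p inS by simp
    next
      case (Some b)
      then have "q' = fst (ntrans C T t p buf b a)" using d unfolding qe Some NN_delta_Some
        by (auto split: if_splits)
      then obtain p' where "p' \<in> p_states C" "q' = enc (f_delta T t b) p' []"
        using ntrans_props(1)[OF st p] by blast
      moreover have "f_delta T t b \<in> f_states T" using T t unfolding fst_wf_def by blast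
      ultimately show ?thesis using inS by simp
    qed
  qed
  have gprops: "\<And>q i a q' g. p_delta ?N q i a = Some (q', g) \<Longrightarrow> okg C a g \<and> (i = None \<longrightarrow> a \<noteq> Z0 \<and> g = [])"
  proof -
    fix q i a q' g
    assume d: "p_delta ?N q i a = Some (q', g)"
    obtain t p buf where qe: "dec q = (t, p, buf)" by (cases "dec q") auto
    show "okg C a g \<and> (i = None \<longrightarrow> a \<noteq> Z0 \<and> g = [])"
    proof (cases i)
      case None
      then show ?thesis using d unfolding okg_def None NN_delta_None'[OF qe] by (auto split: if_splits)
    next
      case (Some b)
      then have "g = fst (snd (ntrans C T t p buf b a))" using d
        unfolding Some NN_delta_Some'[OF qe] by (auto split: if_splits)
      then show ?thesis using Some unfolding okg_def ntrans_def
        by (auto simp: Let_def split: option.split prod.split)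
    qed
  qed
  have nu0: "\<forall>q a. p_delta ?N q None a \<noteq> None \<longrightarrow> p_nu ?N q None a = []"
    using NN_nu_None by blast
  have det: "\<forall>q a. p_delta ?N q None a \<noteq> None \<longrightarrow> (\<forall>b. p_delta ?N q (Some b) a = None)"
  proof (intro allI impI)
    fix q a b assume h: "p_delta ?N q None a \<noteq> None"
    obtain t p buf where qe: "dec q = (t,p,buf)" by (cases "dec q") auto
    show "p_delta ?N q (Some b) a = None" using h unfolding NN_delta_None'[OF qe] NN_delta_Some'[OF qe]
      by (auto split: if_splits)
  qed
  have z1: "\<forall>q i q' g. p_delta ?N q i Z0 = Some (q', g) \<longrightarrow> g \<noteq> [] \<and> last g = Z0 \<and> Z0 \<notin> set (butlast g)"
  proof (intro allI impI)
    fix q i q' g assume "p_delta ?N q i Z0 = Some (q', g)"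
    then have "okg C Z0 g" using gprops by blast
    then show "g \<noteq> [] \<and> last g = Z0 \<and> Z0 \<notin> set (butlast g)" unfolding okg_def by simp
  qed
  have z2: "\<forall>q i a q' g. a \<noteq> Z0 \<longrightarrow> p_delta ?N q i a = Some (q', g) \<longrightarrow> Z0 \<notin> set g"
  proof (intro allI impI)
    fix q i a q' g assume "a \<noteq> Z0" "p_delta ?N q i a = Some (q', g)"
    then have "okg C a g" "a \<noteq> Z0" using gprops by blast+
    then show "Z0 \<notin> set g" unfolding okg_def by simp
  qed
  have z3: "\<forall>q a q' g. p_delta ?N q None a = Some (q', g) \<longrightarrow> a \<noteq> Z0 \<and> g = []"
    using gprops by blast
  show ?thesis unfolding pdc_structural_def
    using fin start clos nu0 det z1 z2 z3 by blast
qed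

lemma NN_uflag:
  assumes "uflag C" shows "uflag (NN C T)"
proof -
  have "\<And>q i a q' g. p_delta (NN C T) q i a = Some (q', g) \<Longrightarrow> S1 \<notin> set g"
  proof -
    fix q i a q' g
    assume d: "p_delta (NN C T) q i a = Some (q', g)"
    obtain t p buf where qe: "dec q = (t, p, buf)" by (cases "dec q") auto
    show "S1 \<notin> set g"
    proof (cases i)
      case None
      then show ?thesis using d unfolding None NN_delta_None'[OF qe] by (auto split: if_splits)
    next
      case (Some b)
      then have "g = fst (snd (ntrans C T t p buf b a))" using d
        unfolding Some NN_delta_Some'[OF qe] by (auto split: if_splits)
      then show ?thesis using Some assms unfolding okg_def ntrans_def
        by (auto simp: Let_def split: option.split prod.split)
    qed
  qed
  then show ?thesis unfolding uflag_def by blast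
qed


lemma fst_run_snoc: "fst_run T (x@[b]) =
   (f_delta T (fst_state T x) b, fst_out T x @ f_nu T (fst_state T x) b)"
  unfolding fst_run_def fst_state_def fst_out_def by (simp split: prod.split)

lemma fst_state_snoc: "fst_state T (x@[b]) = f_delta T (fst_state T x) b"
  using fst_run_snoc[of T x b] by (simp add: fst_state_def)

lemma fst_out_snoc: "fst_out T (x@[b]) = fst_out T x @ f_nu T (fst_state T x) b"
  using fst_run_snoc[of T x b] by (simp add: fst_out_def)

lemma fst_state_in: "fst_wf T \<Longrightarrow> fst_state T x \<in> f_states T"
proof (induction x rule: rev_induct)
  case Nil then show ?case by (simp add: fst_state_def fst_run_def fst_wf_def)
next
  case (snoc b x) then show ?case by (simp add: fst_state_snoc fst_wf_def)
qed

lemma Lmax_ge: "fst_wf T \<Longrightarrow> t \<in> f_states T \<Longrightarrow> length (f_nu T t b) \<le> Lmax T"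
  unfolding Lmax_def fst_wf_def
  by (rule Max_ge) (auto intro: finite_imageI)

lemma N_lam:
  assumes "Z0 \<in> set st" "Mb C T \<le> k + length buf" "length buf \<le> Mb C T"
  shows "\<exists>buf2 st2. lam_close (NN C T) k (enc t p buf, st, ob) = (enc t p buf2, st2, ob) \<and>
     buf @ st = buf2 @ st2 \<and> length buf2 \<le> Mb C T \<and> (length buf2 = Mb C T \<or> hd st2 = Z0) \<and> Z0 \<in> set st2"
  using assms
proof (induction k arbitrary: buf st)
  case 0 then show ?case by auto
next
  case (Suc k)
  obtain a rest where st: "st = a # rest" using Suc.prems(1) by (cases st) auto
  show ?case
  proof (cases "a \<noteq> Z0 \<and> length buf < Mb C T")
    case False
    then have "pdc_step (NN C T) None (enc t p buf, st, ob) = None"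
      using st by (simp add: NN_delta_None)
    then show ?thesis using False st Suc.prems by auto
  next
    case True
    then have e: "pdc_step (NN C T) None (enc t p buf, st, ob) = Some (enc t p (buf@[a]), rest, ob)"
      using st by (simp add: NN_delta_None NN_nu_None)
    have "Z0 \<in> set rest" using True st Suc.prems(1) by auto
    moreover have "Mb C T \<le> k + length (buf@[a])" "length (buf@[a]) \<le> Mb C T" using Suc.prems True by auto
    ultimately obtain buf2 st2 where
      "lam_close (NN C T) k (enc t p (buf@[a]), rest, ob) = (enc t p buf2, st2, ob) \<and>
     (buf@[a]) @ rest = buf2 @ st2 \<and> length buf2 \<le> Mb C T \<and> (length buf2 = Mb C T \<or> hd st2 = Z0) \<and> Z0 \<in> set st2"
      using Suc.IH by blast
    then show ?thesis using e st by auto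
  qed
qed


lemma reach:
  assumes stc: "pdc_structural C" and tot: "\<forall>w. pdc_run C w \<noteq> None" and T: "fst_wf T"
  shows "\<exists>p buf stk out. pdc_run (NN C T) x = Some (enc (fst_state T x) p buf, stk, out) \<and>
     pdc_run C (fst_out T x) = Some (p, buf@stk, out) \<and> length buf \<le> Mb C T \<and>
     (length buf = Mb C T \<or> hd stk = Z0) \<and> Z0 \<in> set stk"
proof (induction x rule: rev_induct)
  case Nil
  have "fst_state T [] = f_start T" "fst_out T [] = []"
    by (simp_all add: fst_state_def fst_out_def fst_run_def)
  then show ?case by (simp add: pdc_run_def)
next
  case (snoc b x)
  let ?N = "NN C T"
  let ?M = "Mb C T"
  define t where "t = fst_state T x"
  define u where "u = f_nu T t b"
  define t' where "t' = f_delta T t b"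
  obtain p buf stk out where
    rN: "pdc_run ?N x = Some (enc t p buf, stk, out)" and
    rC: "pdc_run C (fst_out T x) = Some (p, buf@stk, out)" and
    lb: "length buf \<le> ?M" and full: "length buf = ?M \<or> hd stk = Z0" and z: "Z0 \<in> set stk"
    using snoc.IH unfolding t_def by blast
  obtain a rest where stk: "stk = a # rest" using z by (cases stk) auto
  have tin: "t \<in> f_states T" using fst_state_in[OF T] t_def by simp
  have runN: "pdc_run ?N (x@[b]) = stepC ?N b (enc t p buf, a#rest, out)"
    using rN stk by (simp add: pdc_run_runFrom runFrom_append)
  have nl: "\<not> (a \<noteq> Z0 \<and> length buf < ?M)" using full stk by auto
  have g: "good (length u * Suc (p_c C)) (buf@[a])"
  proof (cases "a = Z0")
    case True then show ?thesis unfolding good_def by simp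
  next
    case False
    then have "length buf = ?M" using full stk by auto
    moreover have "length u \<le> Lmax T" using Lmax_ge[OF T tin] u_def by simp
    moreover have "length u * Suc (p_c C) \<le> Lmax T * Suc (p_c C)"
      using \<open>length u \<le> Lmax T\<close> by (rule mult_le_mono1)
    ultimately show ?thesis unfolding good_def Mb_def by simp
  qed
  have realC: "pdc_run C (fst_out T x @ u) = map_option (shift rest out) (runFrom C (Some (p, buf@[a], [])) u)"
  proof -
    have "pdc_run C (fst_out T x @ u) = runFrom C (Some (p, (buf@[a])@rest, out@[])) u"
      using rC stk by (simp add: pdc_run_runFrom runFrom_append)
    also have "\<dots> = map_option (shift rest out) (runFrom C (Some (p, buf@[a], [])) u)"
      by (rule runFrom_shift[OF stc g])
    finally show ?thesis .
  qed
  obtain cfg where sim0: "runFrom C (Some (p, buf@[a], [])) u = Some cfg"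
  proof (cases "runFrom C (Some (p, buf@[a], [])) u")
    case None
    then have "pdc_run C (fst_out T x @ u) = None" using realC by simp
    then show ?thesis using tot by blast
  next
    case (Some c) then show ?thesis using that by blast
  qed
  obtain p' s' o1 where cfg: "cfg = (p', s', o1)" by (cases cfg) auto
  note sim = sim0[unfolded cfg]
  have rC2: "pdc_run C (fst_out T x @ u) = Some (p', s'@rest, out@o1)" using realC sim by simp
  have i1: "wfs (buf@a#rest)" using pdc_run_inv[OF stc rC] stk by simp
  have i2: "wfs (s'@rest)" "uflag C \<longrightarrow> S1 \<notin> set (s'@rest)" using pdc_run_inv[OF stc rC2] by simp_all
  have ok: "okg C a s'"
  proof (cases "a = Z0")
    case True
    have "rest = []"
    proof (rule ccontr)
      assume "rest \<noteq> []"
      then have "butlast (buf@a#rest) = buf @ a # butlast rest" by (simp add: butlast_append)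
      then show False using i1 True unfolding wfs_def by simp
    qed
    then show ?thesis using True i2 unfolding okg_def wfs_def by simp
  next
    case False
    then have "rest \<noteq> []" using i1 unfolding wfs_def by (cases rest) auto
    then have "butlast (s'@rest) = s' @ butlast rest" by (simp add: butlast_append)
    then have "Z0 \<notin> set s'" using i2(1) unfolding wfs_def by simp
    then show ?thesis using False i2(2) unfolding okg_def by simp
  qed
  have nt: "ntrans C T t p buf b a = (enc t' p' [], s', o1)"
    unfolding ntrans_def using sim ok u_def t'_def by (simp add: Let_def)
  have stepIn: "pdc_step ?N (Some b) (enc t p buf, a#rest, out) = Some (enc t' p' [], s'@rest, out@o1)"
    using nl nt by (simp add: NN_delta_Some NN_nu_Some)
  have z2: "Z0 \<in> set (s'@rest)" using i2(1) unfolding wfs_def by (metis last_in_set)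
  obtain buf2 st2 where L: "lam_close ?N ?M (enc t' p' [], s'@rest, out@o1) = (enc t' p' buf2, st2, out@o1)"
    and e2: "s'@rest = buf2 @ st2" and lb2: "length buf2 \<le> ?M" and f2: "length buf2 = ?M \<or> hd st2 = Z0"
    and z3: "Z0 \<in> set st2"
    using N_lam[OF z2, of C T ?M "[]" t' p' "out@o1"] by auto
  obtain a2 r2 where st2: "st2 = a2 # r2" using z3 by (cases st2) auto
  have "pdc_step ?N None (enc t' p' buf2, st2, out@o1) = None"
    using f2 st2 by (auto simp: NN_delta_None)
  then have "pdc_run ?N (x@[b]) = Some (enc t' p' buf2, st2, out@o1)"
    using runN stepIn L by (simp add: stepC_def)
  moreover have "fst_state T (x@[b]) = t'" using fst_state_snoc t'_def t_def by simp
  moreover have "fst_out T (x@[b]) = fst_out T x @ u" using fst_out_snoc u_def t_def by simp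
  ultimately show ?case using rC2 e2 lb2 f2 z3 by auto
qed


lemma main_gen:
  assumes stc: "pdc_structural C" and tot: "\<forall>w. pdc_run C w \<noteq> None"
    and injC: "inj (\<lambda>w. (pdc_out C w, pdc_state C w))" and IT: "ILFST T"
  shows "is_pdc (NN C T) \<and> inj (\<lambda>w. (pdc_out (NN C T) w, pdc_state (NN C T) w)) \<and>
         (\<forall>x. pdc_out (NN C T) x = pdc_out C (fst_out T x))"
proof -
  have T: "fst_wf T" and injT: "inj (\<lambda>x. (fst_out T x, fst_state T x))" using IT unfolding ILFST_def by auto
  note R = reach[OF stc tot T]
  have totN: "\<forall>w. pdc_run (NN C T) w \<noteq> None" using R by fastforce
  have outs: "\<forall>x. pdc_out (NN C T) x = pdc_out C (fst_out T x)"
  proof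
    fix x
    obtain p buf stk out where "pdc_run (NN C T) x = Some (enc (fst_state T x) p buf, stk, out)"
      "pdc_run C (fst_out T x) = Some (p, buf@stk, out)" using R[of x] by blast
    then show "pdc_out (NN C T) x = pdc_out C (fst_out T x)" by (simp add: pdc_out_def)
  qed
  have inj: "inj (\<lambda>w. (pdc_out (NN C T) w, pdc_state (NN C T) w))"
  proof (rule injI)
    fix x y
    assume h: "(pdc_out (NN C T) x, pdc_state (NN C T) x) = (pdc_out (NN C T) y, pdc_state (NN C T) y)"
    obtain p buf stk out where x1: "pdc_run (NN C T) x = Some (enc (fst_state T x) p buf, stk, out)"
      and x2: "pdc_run C (fst_out T x) = Some (p, buf@stk, out)" using R[of x] by blast
    obtain p' buf' stk' out' where y1: "pdc_run (NN C T) y = Some (enc (fst_state T y) p' buf', stk', out')"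
      and y2: "pdc_run C (fst_out T y) = Some (p', buf'@stk', out')" using R[of y] by blast
    have "out = out'" "enc (fst_state T x) p buf = enc (fst_state T y) p' buf'"
      using h x1 y1 by (simp_all add: pdc_out_def pdc_state_def)
    then have e: "out = out'" "fst_state T x = fst_state T y" "p = p'" using enc_inj by blast+
    have "(pdc_out C (fst_out T x), pdc_state C (fst_out T x)) = (pdc_out C (fst_out T y), pdc_state C (fst_out T y))"
      using x2 y2 e by (simp add: pdc_out_def pdc_state_def)
    then have "fst_out T x = fst_out T y" using injC by (simp add: inj_def)
    then show "x = y" using injT e(2) by (simp add: inj_def)
  qed
  have "pdc_structural (NN C T)" using NN_structural[OF stc T] .
  then show ?thesis using totN outs inj unfolding is_pdc_def by blast
qed

theorem mainTheorem2:
  shows "(\<forall>C T. ILPDC C \<and> ILFST T \<longrightarrow>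
            (\<exists>N. ILPDC N \<and> (\<forall>x. pdc_out N x = pdc_out C (fst_out T x)))) \<and>
         (\<forall>C T. ILUPDC C \<and> ILFST T \<longrightarrow>
            (\<exists>N. ILUPDC N \<and> (\<forall>x. pdc_out N x = pdc_out C (fst_out T x))))"
proof (intro conjI allI impI)
  fix C T assume h: "ILPDC C \<and> ILFST T"
  then have "pdc_structural C" "\<forall>w. pdc_run C w \<noteq> None" "inj (\<lambda>w. (pdc_out C w, pdc_state C w))" "ILFST T"
    unfolding ILPDC_def is_pdc_def by auto
  note m = main_gen[OF this]
  show "\<exists>N. ILPDC N \<and> (\<forall>x. pdc_out N x = pdc_out C (fst_out T x))"
    using m unfolding ILPDC_def by blast
next
  fix C T assume h: "ILUPDC C \<and> ILFST T"
  then have "pdc_structural C" "\<forall>w. pdc_run C w \<noteq> None" "inj (\<lambda>w. (pdc_out C w, pdc_state C w))" "ILFST T"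
    unfolding ILUPDC_def is_updc_def is_pdc_def by auto
  note m = main_gen[OF this]
  have "uflag C" using h unfolding ILUPDC_def is_updc_def uflag_def by blast
  then have "uflag (NN C T)" by (rule NN_uflag)
  then show "\<exists>N. ILUPDC N \<and> (\<forall>x. pdc_out N x = pdc_out C (fst_out T x))"
    using m unfolding ILUPDC_def is_updc_def uflag_def by blast
qed

end
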